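(* Let $G$ be a two-step nilpotent group and let $a,b,c,d,m,n$ be integers. If $S\colon G^2\to G^2$, $S(x,y)=\bigl(x^ay^b[y,x]^m,\;x^cy^d[y,x]^n\bigr)$, is a solution of the Yang--Baxter equation on $G$, then $\bar S\colon G^2\to G^2$, $\bar S(x,y)=\bigl(x^dy^c[y,x]^{dc-n},\;x^by^a[y,x]^{ab-m}\bigr)$, is also a solution of the Yang--Baxter equation on $G$.
   Context: A two-step nilpotent group is a group of nilpotency class at most $2$ (all commutators central); commutators are $[x,y]=x^{-1}y^{-1}xy$. A map $S\colon X^2\to X^2$ is a solution of the Yang--Baxter equation on $X$ if $S_1S_2S_1=S_2S_1S_2$ on $X^3$, where $S_1=S\times\mathrm{Id}$, $S_2=\mathrm{Id}\times S$. *)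

theory Defs
  imports "HOL-Algebra.Group"
begin

definition commutator :: "('a, 'b) monoid_scheme \<Rightarrow> 'a \<Rightarrow> 'a \<Rightarrow> 'a" where
  "commutator G x y = inv\<^bsub>G\<^esub> x \<otimes>\<^bsub>G\<^esub> inv\<^bsub>G\<^esub> y \<otimes>\<^bsub>G\<^esub> x \<otimes>\<^bsub>G\<^esub> y"

definition two_step_nilpotent :: "('a, 'b) monoid_scheme \<Rightarrow> bool" where
  "two_step_nilpotent G \<longleftrightarrow> group G \<and>
     (\<forall>x\<in>carrier G. \<forall>y\<in>carrier G. \<forall>z\<in>carrier G.
        commutator G x y \<otimes>\<^bsub>G\<^esub> z = z \<otimes>\<^bsub>G\<^esub> commutator G x y)"

definition S1 :: "('a \<times> 'a \<Rightarrow> 'a \<times> 'a) \<Rightarrow> 'a \<times> 'a \<times> 'a \<Rightarrow> 'a \<times> 'a \<times> 'a" where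
  "S1 S t = (case t of (x, y, z) \<Rightarrow> (fst (S (x, y)), snd (S (x, y)), z))"

definition S2 :: "('a \<times> 'a \<Rightarrow> 'a \<times> 'a) \<Rightarrow> 'a \<times> 'a \<times> 'a \<Rightarrow> 'a \<times> 'a \<times> 'a" where
  "S2 S t = (case t of (x, y, z) \<Rightarrow> (x, fst (S (y, z)), snd (S (y, z))))"

definition YBE_solution :: "'a set \<Rightarrow> ('a \<times> 'a \<Rightarrow> 'a \<times> 'a) \<Rightarrow> bool" where
  "YBE_solution X S \<longleftrightarrow>
     (\<forall>p\<in>X \<times> X. S p \<in> X \<times> X) \<and>
     (\<forall>t\<in>X \<times> X \<times> X. S1 S (S2 S (S1 S t)) = S2 S (S1 S (S2 S t)))"

end

theory Submission
  imports Defs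
begin

lemma flip_YBE:
  assumes Y: "YBE_solution X S"
    and eq: "\<And>x y. x \<in> X \<Longrightarrow> y \<in> X \<Longrightarrow> T (x, y) = (snd (S (y, x)), fst (S (y, x)))"
  shows "YBE_solution X T"
  unfolding YBE_solution_def
proof (intro conjI ballI)
  have cl: "\<And>x y. x \<in> X \<Longrightarrow> y \<in> X \<Longrightarrow> fst (S (x,y)) \<in> X \<and> snd (S (x,y)) \<in> X"
    using Y unfolding YBE_solution_def by (metis mem_Sigma_iff prod.collapse)
  show "T p \<in> X \<times> X" if "p \<in> X \<times> X" for p
    using that cl eq by auto
  fix t assume t: "t \<in> X \<times> X \<times> X"
  then obtain x y z where xyz: "t = (x,y,z)" "x \<in> X" "y \<in> X" "z \<in> X" by auto
  have YB: "S1 S (S2 S (S1 S (z,y,x))) = S2 S (S1 S (S2 S (z,y,x)))"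
    using Y xyz unfolding YBE_solution_def by auto
  obtain p1 p2 where p: "S (z,y) = (p1,p2)" by fastforce
  obtain q1 q2 where q: "S (p2,x) = (q1,q2)" by fastforce
  obtain r1 r2 where r: "S (p1,q1) = (r1,r2)" by fastforce
  obtain u1 u2 where u: "S (y,x) = (u1,u2)" by fastforce
  obtain v1 v2 where v: "S (z,u1) = (v1,v2)" by fastforce
  obtain w1 w2 where w: "S (v2,u2) = (w1,w2)" by fastforce
  have "p1 \<in> X" "p2 \<in> X" using cl[of z y] p xyz by auto
  moreover have "q1 \<in> X" "q2 \<in> X" using cl[of p2 x] q xyz calculation by auto
  moreover have "u1 \<in> X" "u2 \<in> X" using cl[of y x] u xyz by auto
  moreover have "v1 \<in> X" "v2 \<in> X" using cl[of z u1] v xyz calculation by auto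
  ultimately have mem: "p1 \<in> X" "p2 \<in> X" "q1 \<in> X" "q2 \<in> X" "u1 \<in> X" "u2 \<in> X" "v1 \<in> X" "v2 \<in> X"
    by auto
  from YB have "r1 = v1" "r2 = w1" "q2 = w2"
    by (simp_all add: S1_def S2_def p q r u v w)
  then show "S1 T (S2 T (S1 T t)) = S2 T (S1 T (S2 T t))"
    using xyz mem by (simp add: S1_def S2_def eq p q r u v w)
qed

locale tsn = group +
  assumes central: "\<And>x y z. x \<in> carrier G \<Longrightarrow> y \<in> carrier G \<Longrightarrow> z \<in> carrier G \<Longrightarrow>
    commutator G x y \<otimes> z = z \<otimes> commutator G x y"
begin

lemma cancel[simp]: "a \<in> carrier G \<Longrightarrow> b \<in> carrier G \<Longrightarrow> a \<otimes> (inv a \<otimes> b) = b"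
  by (simp add: m_assoc[symmetric])

lemma cc[simp]: "x \<in> carrier G \<Longrightarrow> y \<in> carrier G \<Longrightarrow> commutator G x y \<in> carrier G"
  by (simp add: commutator_def)

lemma swap: "x \<in> carrier G \<Longrightarrow> y \<in> carrier G \<Longrightarrow> y \<otimes> x = x \<otimes> y \<otimes> commutator G y x"
  by (simp add: commutator_def m_assoc)

lemma conj: "x \<in> carrier G \<Longrightarrow> z \<in> carrier G \<Longrightarrow> inv z \<otimes> x \<otimes> z = x \<otimes> commutator G x z"
  by (simp add: commutator_def m_assoc)

lemma comm_inv: "x \<in> carrier G \<Longrightarrow> y \<in> carrier G \<Longrightarrow> commutator G y x = inv (commutator G x y)"
  by (simp add: commutator_def m_assoc inv_mult_group)

lemma comm_pow_left:
  assumes x: "x \<in> carrier G" and z: "z \<in> carrier G"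
  shows "commutator G (x [^] (k::int)) z = commutator G x z [^] k"
proof -
  have hom: "(\<lambda>u. inv z \<otimes> u \<otimes> z) \<in> hom G G"
    unfolding hom_def using z by (auto simp: m_assoc)
  have "inv z \<otimes> x [^] k \<otimes> z = (inv z \<otimes> x \<otimes> z) [^] k"
    using hom_int_pow[OF hom x is_group is_group] by simp
  also have "\<dots> = (x \<otimes> commutator G x z) [^] k" using conj x z by simp
  also have "\<dots> = x [^] k \<otimes> commutator G x z [^] k"
    by (rule int_pow_mult_distrib) (simp_all add: central x z)
  finally have e: "inv z \<otimes> x [^] k \<otimes> z = x [^] k \<otimes> commutator G x z [^] k" .
  have "commutator G (x [^] k) z = inv (x [^] k) \<otimes> (inv z \<otimes> x [^] k \<otimes> z)"
    using x z by (simp add: commutator_def m_assoc)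
  also have "\<dots> = commutator G x z [^] k" using e x z by (simp add: m_assoc[symmetric])
  finally show ?thesis .
qed

lemma comm_pow_right:
  assumes x: "x \<in> carrier G" and y: "y \<in> carrier G"
  shows "commutator G y (x [^] (k::int)) = commutator G y x [^] k"
  using x y by (simp add: comm_inv[of "x [^] k" y] comm_pow_left comm_inv[of x y] int_pow_inv)

lemma key:
  assumes x: "x \<in> carrier G" and y: "y \<in> carrier G"
  shows "y [^] (c::int) \<otimes> x [^] (d::int) \<otimes> commutator G x y [^] (n::int)
       = x [^] d \<otimes> y [^] c \<otimes> commutator G y x [^] (d * c - n)"
proof -
  have "y [^] c \<otimes> x [^] d = x [^] d \<otimes> y [^] c \<otimes> commutator G (y [^] c) (x [^] d)"
    using x y swap[of "x [^] d" "y [^] c"] by simp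
  also have "commutator G (y [^] c) (x [^] d) = commutator G y x [^] (d * c)"
    using x y by (simp add: comm_pow_left comm_pow_right int_pow_pow mult.commute[of c d])
  finally have 1: "y [^] c \<otimes> x [^] d = x [^] d \<otimes> y [^] c \<otimes> commutator G y x [^] (d * c)" .
  have 2: "commutator G x y [^] n = commutator G y x [^] (- n)"
    using x y by (simp add: comm_inv[of y x] int_pow_inv int_pow_neg)
  show ?thesis using x y
    by (simp add: 1 2 m_assoc int_pow_mult[symmetric])
qed

end

theorem corollary5p12:
  fixes G :: "('g, 'b) monoid_scheme" and a b c d m n :: int
  assumes "two_step_nilpotent G"
    and "YBE_solution (carrier G)
           (\<lambda>(x, y). (x [^]\<^bsub>G\<^esub> a \<otimes>\<^bsub>G\<^esub> y [^]\<^bsub>G\<^esub> b \<otimes>\<^bsub>G\<^esub> commutator G y x [^]\<^bsub>G\<^esub> m,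
                       x [^]\<^bsub>G\<^esub> c \<otimes>\<^bsub>G\<^esub> y [^]\<^bsub>G\<^esub> d \<otimes>\<^bsub>G\<^esub> commutator G y x [^]\<^bsub>G\<^esub> n))"
  shows "YBE_solution (carrier G)
           (\<lambda>(x, y). (x [^]\<^bsub>G\<^esub> d \<otimes>\<^bsub>G\<^esub> y [^]\<^bsub>G\<^esub> c \<otimes>\<^bsub>G\<^esub> commutator G y x [^]\<^bsub>G\<^esub> (d * c - n),
                       x [^]\<^bsub>G\<^esub> b \<otimes>\<^bsub>G\<^esub> y [^]\<^bsub>G\<^esub> a \<otimes>\<^bsub>G\<^esub> commutator G y x [^]\<^bsub>G\<^esub> (a * b - m)))"
proof -
  interpret tsn G
    using assms(1) unfolding two_step_nilpotent_def tsn_def tsn_axioms_def by blast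
  show ?thesis
    by (rule flip_YBE[OF assms(2)]) (simp add: key[of _ _ c d n] key[of _ _ a b m] mult.commute)
qed

end
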